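(* Assume that for all $i,j\in I$ the map $u\mapsto\lambda_{ij}(u)$ is continuous on $U$. Then for every bounded continuous function $w\colon\Delta_e\to\mathbb R$, the function $\rho\mapsto r(\rho,u)\int_{\Delta_e}w(p)\,R(\rho,u;dp)$ is continuous on $\Delta_e$ uniformly in $u\in U$; that is, for every $\rho\in\Delta_e$ and $\varepsilon>0$ there is $\delta>0$ such that $\sup_{u\in U}\bigl|r(\rho',u)\int_{\Delta_e}w\,dR(\rho',u;\cdot)-r(\rho,u)\int_{\Delta_e}w\,dR(\rho,u;\cdot)\bigr|<\varepsilon$ for all $\rho'\in\Delta_e$ with $|\rho'-\rho|<\delta$.
   Context: $I$, $O$ are finite sets and $h\colon I\to O$ is surjective and non-constant. $U$ is a compact metric space. For each $u\in U$, $\Lambda(u)=(\lambda_{ij}(u))_{i,j\in I}$ is a real matrix with $\lambda_{ij}(u)\ge0$ for $i\ne j$ and $\sum_j\lambda_{ij}(u)=0$. Measures on $I$ are row vectors in $\mathbb R^{|I|}$; for $a\in O$, $\Delta_a$ is the set of probability measures on $I$ supported in $h^{-1}(a)$, $\Delta_e=\bigcup_{a\in O}\Delta_a$ with the topology of $\mathbb R^{|I|}$, and $\mathbb 1_{h^{-1}(a)}$ is the column indicator vector of $h^{-1}(a)$. For $b\in O$ and a row vector $\mu$, $H_b[\mu]$ is the row vector with $H_b[\mu](i)=0$ for $i\notin h^{-1}(b)$, $H_b[\mu](i)=\mu(i)/(\mu\mathbb 1_{h^{-1}(b)})$ for $i\in h^{-1}(b)$ when $\mu\mathbb 1_{h^{-1}(b)}\ne0$,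 and $H_b[\mu]=\nu_b$ (a fixed arbitrary element of $\Delta_b$) when $\mu\mathbb 1_{h^{-1}(b)}=0$. For $\rho\in\Delta_a$ and $u\in U$: $r(\rho,u)=-\rho\Lambda(u)\mathbb 1_{h^{-1}(a)}$ and $R(\rho,u;D)=\sum_{b\in O}\mathbb 1_D(H_b[\rho\Lambda(u)])\,q(\rho,u,b)$ for Borel $D\subseteq\Delta_e$, where $q(\rho,u,b)=\frac{\rho\Lambda(u)\mathbb 1_{h^{-1}(b)}}{-\rho\Lambda(u)\mathbb 1_{h^{-1}(a)}}\mathbb 1_{b\ne a}$ if $\rho\Lambda(u)\mathbb 1_{h^{-1}(a)}\ne0$ and $q(\rho,u,b)=q_a(b)$ otherwise, with $q_a$ a fixed arbitrary probability on $O\setminus\{a\}$. *)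

theory Defs
  imports "HOL-Probability.Probability"
begin

text \<open>Measures on I are row vectors, modelled as elements of real^'i
 (Euclidean topology). The generator matrix at u is Lambda u with
 (Lambda u $ i $ j) = lambda_ij(u). Row vector times matrix is v*.\<close>

definition ind :: "('i::finite \<Rightarrow> 'o) \<Rightarrow> 'o \<Rightarrow> real^'i" where
  "ind h a = (\<chi> i. if h i = a then 1 else 0)"

definition Delta :: "('i::finite \<Rightarrow> 'o) \<Rightarrow> 'o \<Rightarrow> (real^'i) set" where
  "Delta h a = {\<rho>. (\<forall>i. 0 \<le> \<rho> $ i) \<and> (\<forall>i. h i \<noteq> a \<longrightarrow> \<rho> $ i = 0)
                     \<and> (\<Sum>i\<in>UNIV. \<rho> $ i) = 1}"

definition Delta_e :: "('i::finite \<Rightarrow> 'o) \<Rightarrow> (real^'i) set" where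
  "Delta_e h = (\<Union>a. Delta h a)"

definition cls :: "('i::finite \<Rightarrow> 'o) \<Rightarrow> real^'i \<Rightarrow> 'o" where
  "cls h \<rho> = (THE a. \<rho> \<in> Delta h a)"

definition Hop :: "('i::finite \<Rightarrow> 'o) \<Rightarrow> ('o \<Rightarrow> real^'i) \<Rightarrow> 'o \<Rightarrow> real^'i \<Rightarrow> real^'i" where
  "Hop h \<nu> b \<mu> = (if \<mu> \<bullet> ind h b \<noteq> 0
      then (\<chi> i. if h i = b then \<mu> $ i / (\<mu> \<bullet> ind h b) else 0)
      else \<nu> b)"

definition rate :: "('i::finite \<Rightarrow> 'o) \<Rightarrow> ('u \<Rightarrow> real^'i^'i) \<Rightarrow> real^'i \<Rightarrow> 'u \<Rightarrow> real" where
  "rate h \<Lambda> \<rho> u = - ((\<rho> v* \<Lambda> u) \<bullet> ind h (cls h \<rho>))"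

definition qjump :: "('i::finite \<Rightarrow> 'o) \<Rightarrow> ('u \<Rightarrow> real^'i^'i) \<Rightarrow> ('o \<Rightarrow> 'o \<Rightarrow> real)
      \<Rightarrow> real^'i \<Rightarrow> 'u \<Rightarrow> 'o \<Rightarrow> real" where
  "qjump h \<Lambda> qa \<rho> u b =
     (let a = cls h \<rho>; s = (\<rho> v* \<Lambda> u) \<bullet> ind h a in
      if s \<noteq> 0 then (if b \<noteq> a then ((\<rho> v* \<Lambda> u) \<bullet> ind h b) / (- s) else 0)
      else qa a b)"

definition Rker :: "('i::finite \<Rightarrow> 'o::finite) \<Rightarrow> ('u \<Rightarrow> real^'i^'i) \<Rightarrow> ('o \<Rightarrow> real^'i)
      \<Rightarrow> ('o \<Rightarrow> 'o \<Rightarrow> real) \<Rightarrow> real^'i \<Rightarrow> 'u \<Rightarrow> (real^'i) measure" where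
  "Rker h \<Lambda> \<nu> qa \<rho> u = measure_of (Delta_e h) (sets (restrict_space borel (Delta_e h)))
     (\<lambda>D. \<Sum>b\<in>UNIV. indicator D (Hop h \<nu> b (\<rho> v* \<Lambda> u)) * ennreal (qjump h \<Lambda> qa \<rho> u b))"

end

theory Submission imports Defs begin

lemma integral_fin_kernel:
  fixes x :: "'o::finite \<Rightarrow> 'a::topological_space" and c :: "'o \<Rightarrow> real"
    and w :: "'a \<Rightarrow> real"
  assumes x_in: "\<And>b. c b \<noteq> 0 \<Longrightarrow> x b \<in> \<Omega>" and c_nn: "\<And>b. 0 \<le> c b"
    and w0: "\<omega>0 \<in> \<Omega>" and wc: "continuous_on \<Omega> w"
  shows "integral\<^sup>L (measure_of \<Omega> (sets (restrict_space borel \<Omega>))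
      (\<lambda>D. \<Sum>b\<in>UNIV. indicator D (x b) * ennreal (c b))) w = (\<Sum>b\<in>UNIV. c b * w (x b))"
proof -
  define x' where "x' b = (if x b \<in> \<Omega> then x b else \<omega>0)" for b
  have x'in: "x' b \<in> \<Omega>" for b using w0 by (simp add: x'_def)
  define N where "N = distr (point_measure UNIV (\<lambda>b. ennreal (c b))) (restrict_space borel \<Omega>) x'"
  have meas: "x' \<in> measurable (point_measure UNIV (\<lambda>b. ennreal (c b))) (restrict_space borel \<Omega>)"
    using x'in by (simp add: space_restrict_space)
  have spN: "space N = \<Omega>" by (simp add: N_def space_restrict_space)
  have stN: "sets N = sets (restrict_space borel \<Omega>)" by (simp add: N_def)
  have "measure_of \<Omega> (sets (restrict_space borel \<Omega>))
      (\<lambda>D. \<Sum>b\<in>UNIV. indicator D (x b) * ennreal (c b))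
     = measure_of \<Omega> (sets (restrict_space borel \<Omega>)) (emeasure N)"
  proof (rule measure_of_eq)
    show "sets (restrict_space borel \<Omega>) \<subseteq> Pow \<Omega>"
      using sets.space_closed[of "restrict_space borel \<Omega>"] by (simp add: space_restrict_space)
    fix D assume "D \<in> sigma_sets \<Omega> (sets (restrict_space borel \<Omega>))"
    then have D: "D \<in> sets (restrict_space borel \<Omega>)"
      using sets.sigma_sets_eq[of "restrict_space borel \<Omega>"] by (simp add: space_restrict_space)
    have Dsub: "D \<subseteq> \<Omega>" using sets.sets_into_space[OF D] by (simp add: space_restrict_space)
    have "emeasure N D = emeasure (point_measure UNIV (\<lambda>b. ennreal (c b))) (x' -` D)"
      unfolding N_def using D meas by (simp add: emeasure_distr space_point_measure)
    also have "\<dots> = (\<Sum>b\<in>x' -` D. ennreal (c b))"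
      by (simp add: emeasure_point_measure_finite)
    also have "\<dots> = (\<Sum>b\<in>UNIV. indicator D (x' b) * ennreal (c b))"
      proof -
      have "x' -` D = {b\<in>UNIV. x' b \<in> D}" by auto
      then show ?thesis by (simp add: sum.inter_filter indicator_def)
    qed
    also have "\<dots> = (\<Sum>b\<in>UNIV. indicator D (x b) * ennreal (c b))"
    proof (rule sum.cong)
      fix b show "indicator D (x' b) * ennreal (c b) = indicator D (x b) * ennreal (c b)"
        using x_in[of b] Dsub by (cases "c b = 0") (auto simp: x'_def indicator_def)
    qed simp
    finally show "(\<Sum>b\<in>UNIV. indicator D (x b) * ennreal (c b)) = emeasure N D" by simp
  qed
  also have "\<dots> = N" using measure_of_of_measure[of N] spN stN by simp
  finally have eq: "measure_of \<Omega> (sets (restrict_space borel \<Omega>))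
      (\<lambda>D. \<Sum>b\<in>UNIV. indicator D (x b) * ennreal (c b)) = N" .
  have wm: "w \<in> borel_measurable (restrict_space borel \<Omega>)"
    using wc by (rule borel_measurable_continuous_on_restrict)
  have "integral\<^sup>L N w = integral\<^sup>L (point_measure UNIV (\<lambda>b. ennreal (c b))) (\<lambda>b. w (x' b))"
    unfolding N_def by (rule integral_distr[OF meas wm])
  also have "\<dots> = (\<Sum>b\<in>UNIV. c b * w (x' b))"
    using lebesgue_integral_point_measure_finite[of UNIV c "\<lambda>b. w (x' b)"] c_nn by simp
  also have "\<dots> = (\<Sum>b\<in>UNIV. c b * w (x b))"
    by (rule sum.cong) (auto simp: x'_def dest: x_in)
  finally show ?thesis using eq by simp
qed

lemma Delta_disj:
  assumes "\<rho> \<in> Delta h a" "\<rho> \<in> Delta h b" shows "a = b"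
proof (rule ccontr)
  assume "a \<noteq> b"
  then have "\<forall>i. \<rho> $ i = 0" using assms by (auto simp: Delta_def)
  then show False using assms by (simp add: Delta_def)
qed

lemma cls_eq: "\<rho> \<in> Delta h a \<Longrightarrow> cls h \<rho> = a"
  unfolding cls_def by (rule the_equality) (auto dest: Delta_disj)

lemma inner_ind: "(\<mu>::real^'i::finite) \<bullet> ind h b = (\<Sum>i\<in>UNIV. if h i = b then \<mu> $ i else 0)"
  by (simp add: inner_vec_def ind_def if_distrib cong: if_cong)

lemma sum_inner_ind:
  "(\<Sum>b\<in>(UNIV::'o::finite set). (\<mu>::real^'i::finite) \<bullet> ind h b) = (\<Sum>i\<in>UNIV. \<mu> $ i)"
proof -
  have "(\<Sum>b\<in>(UNIV::'o set). \<mu> \<bullet> ind h b) = (\<Sum>b\<in>(UNIV::'o set). \<Sum>i\<in>{x\<in>UNIV. h x = b}. \<mu> $ i)"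
    unfolding inner_ind by (rule sum.cong[OF refl]) (simp flip: sum.inter_filter)
  also have "\<dots> = (\<Sum>i\<in>UNIV. \<mu> $ i)" by (rule sum.group) auto
  finally show ?thesis .
qed

lemma mu_offdiag:
  assumes od: "\<forall>i j. i \<noteq> j \<longrightarrow> 0 \<le> L $ i $ j" and r: "\<rho> \<in> Delta h a"
    and hi: "h i \<noteq> a"
  shows "0 \<le> (\<rho> v* L) $ i"
proof -
  have "0 \<le> \<rho> $ j * L $ j $ i" for j
    using r od[rule_format, of j i] hi by (cases "h j = a") (auto simp: Delta_def intro!: mult_nonneg_nonneg)
  then show ?thesis by (simp add: vector_matrix_mult_def sum_nonneg)
qed

lemma mu_sum0:
  assumes rs: "\<forall>i. (\<Sum>j\<in>UNIV. L $ i $ j) = (0::real)"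
  shows "(\<Sum>i\<in>UNIV. ((\<rho>::real^'i::finite) v* L) $ i) = 0"
proof -
  have "(\<Sum>i\<in>UNIV. (\<rho> v* L) $ i) = (\<Sum>j\<in>UNIV. \<rho> $ j * (\<Sum>i\<in>UNIV. L $ j $ i))"
  proof -
    have "(\<Sum>i\<in>UNIV. (\<rho> v* L) $ i) = (\<Sum>i\<in>UNIV. \<Sum>j\<in>UNIV. \<rho> $ j * L $ j $ i)"
      by (simp add: vector_matrix_mult_def)
    also have "\<dots> = (\<Sum>j\<in>UNIV. \<Sum>i\<in>UNIV. \<rho> $ j * L $ j $ i)" by (rule sum.swap)
    also have "\<dots> = (\<Sum>j\<in>UNIV. \<rho> $ j * (\<Sum>i\<in>UNIV. L $ j $ i))" by (simp add: sum_distrib_left)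
    finally show ?thesis .
  qed
  also have "\<dots> = 0" using rs by simp
  finally show ?thesis .
qed

lemma inner_ind_nonneg:
  assumes od: "\<forall>i j. i \<noteq> j \<longrightarrow> 0 \<le> L $ i $ j" and r: "\<rho> \<in> Delta h a"
    and hb: "b \<noteq> a"
  shows "0 \<le> (\<rho> v* L) \<bullet> ind h b"
  unfolding inner_ind by (rule sum_nonneg) (use mu_offdiag[OF od r] hb in auto)

lemma Hop_in:
  assumes od: "\<forall>i j. i \<noteq> j \<longrightarrow> 0 \<le> L $ i $ j" and r: "\<rho> \<in> Delta h a"
    and hb: "b \<noteq> a" and nu: "\<forall>b. \<nu> b \<in> Delta h b"
  shows "Hop h \<nu> b (\<rho> v* L) \<in> Delta_e h"
proof (cases "(\<rho> v* L) \<bullet> ind h b = 0")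
  case True then show ?thesis using nu by (auto simp: Hop_def Delta_e_def)
next
  case False
  let ?m = "\<rho> v* L"
  have pos: "0 < ?m \<bullet> ind h b" using False inner_ind_nonneg[OF od r hb] by simp
  let ?S = "?m \<bullet> ind h b"
  have s1: "(\<Sum>x\<in>UNIV. if h x = b then ?m $ x / ?S else 0) = (\<Sum>x\<in>UNIV. if h x = b then ?m $ x else 0) / ?S"
    by (subst sum_divide_distrib) (rule sum.cong, auto)
  have s2: "(\<Sum>x\<in>UNIV. if h x = b then ?m $ x else 0) = ?S" by (simp add: inner_ind)
  have "Hop h \<nu> b ?m \<in> Delta h b"
    unfolding Delta_def Hop_def using False pos s1 s2
    by (auto simp: mu_offdiag[OF od r] hb)
  then show ?thesis by (auto simp: Delta_e_def)
qed


definition Gf :: "('i::finite \<Rightarrow> 'o::finite) \<Rightarrow> ('o \<Rightarrow> real^'i) \<Rightarrow> (real^'i \<Rightarrow> real) \<Rightarrow> 'o \<Rightarrow> real^'i \<Rightarrow> real"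
  where "Gf h \<nu> w a \<mu> = (\<Sum>b\<in>UNIV. if b = a then 0 else (\<mu> \<bullet> ind h b) * w (Hop h \<nu> b \<mu>))"

lemma rate_int_eq:
  fixes h :: "'i::finite \<Rightarrow> 'o::finite"
  assumes od: "\<forall>i j. i \<noteq> j \<longrightarrow> 0 \<le> \<Lambda> u $ i $ j"
    and rs: "\<forall>i. (\<Sum>j\<in>UNIV. \<Lambda> u $ i $ j) = 0"
    and r: "\<rho> \<in> Delta h a" and nu: "\<forall>b. \<nu> b \<in> Delta h b"
    and qa_prob: "\<forall>a. (\<forall>b. 0 \<le> qa a b) \<and> qa a a = 0 \<and> (\<Sum>b\<in>UNIV. qa a b) = 1"
    and wc: "continuous_on (Delta_e h) w"
  shows "rate h \<Lambda> \<rho> u * integral\<^sup>L (Rker h \<Lambda> \<nu> qa \<rho> u) w = Gf h \<nu> w a (\<rho> v* \<Lambda> u)"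
proof -
  define m where "m = \<rho> v* \<Lambda> u"
  define s where "s = m \<bullet> ind h a"
  have cl: "cls h \<rho> = a" using r by (rule cls_eq)
  have nn: "b \<noteq> a \<Longrightarrow> 0 \<le> m \<bullet> ind h b" for b
    unfolding m_def by (rule inner_ind_nonneg[OF od r])
  have "(\<Sum>b\<in>UNIV. m \<bullet> ind h b) = 0"
    unfolding sum_inner_ind m_def by (rule mu_sum0[OF rs])
  then have tot: "s + (\<Sum>b\<in>UNIV-{a}. m \<bullet> ind h b) = 0"
    unfolding s_def by (simp add: sum.remove[of UNIV a])
  have restnn: "0 \<le> (\<Sum>b\<in>UNIV-{a}. m \<bullet> ind h b)" by (rule sum_nonneg) (use nn in auto)
  have hop: "b \<noteq> a \<Longrightarrow> Hop h \<nu> b m \<in> Delta_e h" for b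
    unfolding m_def by (rule Hop_in[OF od r _ nu])
  have qj: "qjump h \<Lambda> qa \<rho> u b = (if s \<noteq> 0 then (if b \<noteq> a then (m \<bullet> ind h b) / (- s) else 0) else qa a b)" for b
    by (simp add: qjump_def Let_def cl m_def s_def)
  have qnn: "0 \<le> qjump h \<Lambda> qa \<rho> u b" for b
  proof (cases "s = 0")
    case True
    have "0 \<le> qa a b" using qa_prob by blast
    then show ?thesis unfolding qj using True by simp
  next
    case False
    have sn: "s < 0" using tot restnn False by linarith
    show ?thesis
    proof (cases "b = a")
      case True then show ?thesis unfolding qj using False by simp
    next
      case ba: False
      have "0 \<le> (m \<bullet> ind h b) / (- s)" using nn[OF ba] sn by (simp add: divide_nonneg_neg)
      then show ?thesis unfolding qj using ba False by simp
    qed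
  qed
  have qa0: "qjump h \<Lambda> qa \<rho> u a = 0"
  proof -
    have "qa a a = 0" using qa_prob by blast
    then show ?thesis unfolding qj by simp
  qed
  have nuin: "\<nu> a \<in> Delta_e h" using nu by (auto simp: Delta_e_def)
  have int: "integral\<^sup>L (Rker h \<Lambda> \<nu> qa \<rho> u) w = (\<Sum>b\<in>UNIV. qjump h \<Lambda> qa \<rho> u b * w (Hop h \<nu> b m))"
    unfolding Rker_def m_def
  proof (rule integral_fin_kernel[OF _ qnn nuin wc])
    fix b assume "qjump h \<Lambda> qa \<rho> u b \<noteq> 0"
    then have "b \<noteq> a" using qa0 by auto
    then show "Hop h \<nu> b (\<rho> v* \<Lambda> u) \<in> Delta_e h" using hop unfolding m_def by simp
  qed
  have rt: "rate h \<Lambda> \<rho> u = - s" by (simp add: rate_def cl m_def s_def)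
  show ?thesis
  proof (cases "s = 0")
    case False
    have "rate h \<Lambda> \<rho> u * integral\<^sup>L (Rker h \<Lambda> \<nu> qa \<rho> u) w
        = (\<Sum>b\<in>UNIV. (- s) * (qjump h \<Lambda> qa \<rho> u b * w (Hop h \<nu> b m)))"
      unfolding rt int by (simp add: sum_distrib_left)
    also have "\<dots> = Gf h \<nu> w a m"
      unfolding Gf_def
    proof (rule sum.cong[OF refl])
      fix b show "- s * (qjump h \<Lambda> qa \<rho> u b * w (Hop h \<nu> b m)) =
         (if b = a then 0 else m \<bullet> ind h b * w (Hop h \<nu> b m))"
      proof (cases "b = a")
        case True then show ?thesis using qa0 by simp
      next
        case F: False
        have "qjump h \<Lambda> qa \<rho> u b = (m \<bullet> ind h b) / (- s)" using qj[of b] F False by simp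
        then show ?thesis using F False by simp
      qed
    qed
    finally show ?thesis unfolding m_def[symmetric] .
  next
    case True
    have z: "b \<noteq> a \<Longrightarrow> m \<bullet> ind h b = 0" for b
    proof -
      assume ba: "b \<noteq> a"
      have s0: "(\<Sum>b\<in>UNIV-{a}. m \<bullet> ind h b) = 0" using tot True by simp
      have "\<forall>x\<in>UNIV-{a}. 0 \<le> m \<bullet> ind h x" using nn by blast
      then have "\<forall>x\<in>UNIV-{a}. m \<bullet> ind h x = 0"
        using sum_nonneg_eq_0_iff[of "UNIV-{a}" "\<lambda>b. m \<bullet> ind h b"] s0 by simp
      then show ?thesis using ba by blast
    qed
    have "Gf h \<nu> w a m = 0" unfolding Gf_def by (rule sum.neutral) (simp add: z)
    then show ?thesis unfolding m_def[symmetric] rt True by simp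
  qed
qed


lemma cont_term:
  fixes h :: "'i::finite \<Rightarrow> 'o::finite" and U :: "'u::metric_space set"
  assumes od: "\<forall>u\<in>U. \<forall>i j. i \<noteq> j \<longrightarrow> 0 \<le> \<Lambda> u $ i $ j"
    and lam_cont: "\<forall>i j. continuous_on U (\<lambda>u. \<Lambda> u $ i $ j)"
    and wc: "continuous_on (Delta_e h) w"
    and wb: "\<forall>x\<in>Delta_e h. \<bar>w x\<bar> \<le> B"
    and nu: "\<forall>b. \<nu> b \<in> Delta h b" and hb: "b \<noteq> a"
  shows "continuous_on (Delta h a \<times> U)
    (\<lambda>p. ((fst p v* \<Lambda> (snd p)) \<bullet> ind h b) * w (Hop h \<nu> b (fst p v* \<Lambda> (snd p))))"
proof -
  define K where "K = Delta h a \<times> U"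
  define m where "m = (\<lambda>p. fst p v* \<Lambda> (snd p))"
  define f where "f = (\<lambda>p. m p \<bullet> ind h b)"
  have lc: "continuous_on K (\<lambda>p. \<Lambda> (snd p) $ i $ j)" for i j
    by (rule continuous_on_compose2[OF lam_cont[rule_format] continuous_on_snd]) (auto simp: K_def)
  have mc: "continuous_on K m"
    unfolding m_def vector_matrix_mult_def
    by (intro continuous_on_vec_lambda continuous_on_sum continuous_on_mult lc
          continuous_on_component continuous_on_fst continuous_on_id)
  have fc: "continuous_on K f"
    unfolding f_def by (intro continuous_on_inner mc continuous_on_const)
  have fnn: "p \<in> K \<Longrightarrow> 0 \<le> f p" for p
  proof -
    assume "p \<in> K"
    then have "fst p \<in> Delta h a" "snd p \<in> U" by (auto simp: K_def mem_Times_iff)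
    then show ?thesis unfolding f_def m_def by (rule inner_ind_nonneg[OF bspec[OF od] _ hb, rotated])
  qed
  have hopin: "p \<in> K \<Longrightarrow> Hop h \<nu> b (m p) \<in> Delta_e h" for p
  proof -
    assume "p \<in> K"
    then have "fst p \<in> Delta h a" "snd p \<in> U" by (auto simp: K_def mem_Times_iff)
    then show ?thesis unfolding m_def by (rule Hop_in[OF bspec[OF od] _ hb nu, rotated])
  qed
  have "continuous_on K (\<lambda>p. f p * w (Hop h \<nu> b (m p)))"
    unfolding continuous_on_def
  proof (intro ballI)
    fix p assume pK: "p \<in> K"
    let ?F = "at p within K"
    have ftend: "(f \<longlongrightarrow> f p) ?F" using fc pK by (simp add: continuous_on_def)
    have mtend: "(m \<longlongrightarrow> m p) ?F" using mc pK by (simp add: continuous_on_def)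
    have evK: "eventually (\<lambda>q. q \<in> K) ?F" by (simp add: eventually_at_filter)
    show "((\<lambda>q. f q * w (Hop h \<nu> b (m q))) \<longlongrightarrow> f p * w (Hop h \<nu> b (m p))) ?F"
    proof (cases "f p = 0")
      case True
      have "((\<lambda>q. f q * w (Hop h \<nu> b (m q))) \<longlongrightarrow> 0) ?F"
      proof (rule Lim_null_comparison)
        show "eventually (\<lambda>q. norm (f q * w (Hop h \<nu> b (m q))) \<le> B * \<bar>f q\<bar>) ?F"
        proof (rule eventually_mono[OF evK])
          fix q assume "q \<in> K"
          then have "\<bar>w (Hop h \<nu> b (m q))\<bar> \<le> B" using wb hopin by blast
          then show "norm (f q * w (Hop h \<nu> b (m q))) \<le> B * \<bar>f q\<bar>"
            by (simp add: abs_mult mult.commute[of B] mult_left_mono)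
        qed
        have "((\<lambda>q. B * \<bar>f q\<bar>) \<longlongrightarrow> B * \<bar>f p\<bar>) ?F"
          by (intro tendsto_mult tendsto_const tendsto_rabs ftend)
        then show "((\<lambda>q. B * \<bar>f q\<bar>) \<longlongrightarrow> 0) ?F" using True by simp
      qed
      then show ?thesis using True by simp
    next
      case False
      have fp: "0 < f p" using False fnn[OF pK] by simp
      have evpos: "eventually (\<lambda>q. 0 < f q) ?F" using order_tendstoD(1)[OF ftend fp] .
      define H' where "H' = (\<lambda>\<mu>::real^'i. \<chi> i. if h i = b then \<mu> $ i / (\<mu> \<bullet> ind h b) else 0)"
      have Heq: "f q \<noteq> 0 \<Longrightarrow> Hop h \<nu> b (m q) = H' (m q)" for q
        by (simp add: Hop_def H'_def f_def)
      have Htend: "((\<lambda>q. H' (m q)) \<longlongrightarrow> H' (m p)) ?F"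
        unfolding H'_def
      proof (rule tendsto_vec_lambda)
        fix i
        show "((\<lambda>q. if h i = b then m q $ i / (m q \<bullet> ind h b) else 0) \<longlongrightarrow>
              (if h i = b then m p $ i / (m p \<bullet> ind h b) else 0)) ?F"
        proof (cases "h i = b")
          case True
          have "((\<lambda>q. m q $ i / f q) \<longlongrightarrow> m p $ i / f p) ?F"
            by (intro tendsto_divide tendsto_vec_nth mtend ftend False)
          then show ?thesis using True by (simp add: f_def)
        qed simp
      qed
      have Hp: "H' (m p) \<in> Delta_e h" using hopin[OF pK] Heq[OF False] by simp
      have evH: "eventually (\<lambda>q. H' (m q) \<in> Delta_e h) ?F"
        using eventually_conj[OF evK evpos]
        by (rule eventually_mono) (metis Heq hopin less_irrefl)
      have wtend: "((\<lambda>q. w (H' (m q))) \<longlongrightarrow> w (H' (m p))) ?F"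
        using continuous_on_tendsto_compose[OF wc Htend Hp evH] by (simp add: o_def)
      have evE: "eventually (\<lambda>q. w (H' (m q)) = w (Hop h \<nu> b (m q))) ?F"
        using evpos by (rule eventually_mono) (simp add: Heq)
      have "((\<lambda>q. w (Hop h \<nu> b (m q))) \<longlongrightarrow> w (Hop h \<nu> b (m p))) ?F"
        using Lim_transform_eventually[OF wtend evE] Heq[OF False] by simp
      then show ?thesis by (intro tendsto_mult ftend)
    qed
  qed
  then show ?thesis by (simp add: K_def f_def m_def)
qed


lemma Delta_sep:
  fixes \<rho>0 :: "real^'i::finite"
  assumes r0: "\<rho>0 \<in> Delta h a" and r1: "\<rho>' \<in> Delta h b" and ab: "a \<noteq> b"
  shows "1 / real CARD('i) \<le> dist \<rho>' \<rho>0"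
proof -
  have "1 = (\<Sum>i\<in>UNIV. \<rho>0 $ i)" using r0 by (simp add: Delta_def)
  also have "\<dots> = (\<Sum>i\<in>UNIV. if h i = a then (\<rho>0 - \<rho>') $ i else 0)"
    by (rule sum.cong[OF refl]) (use r0 r1 ab in \<open>auto simp: Delta_def\<close>)
  also have "\<dots> \<le> (\<Sum>i\<in>(UNIV::'i set). norm (\<rho>0 - \<rho>'))"
  proof -
    have "\<And>i. (if h i = a then (\<rho>0 - \<rho>') $ i else 0) \<le> norm (\<rho>0 - \<rho>')"
    proof -
      fix i
      have "\<bar>(\<rho>0 - \<rho>') $ i\<bar> \<le> norm (\<rho>0 - \<rho>')" by (rule component_le_norm_cart)
      then show "(if h i = a then (\<rho>0 - \<rho>') $ i else 0) \<le> norm (\<rho>0 - \<rho>')" by auto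
    qed
    then show ?thesis by (rule sum_mono)
  qed
  also have "\<dots> = real CARD('i) * dist \<rho>' \<rho>0"
    by (simp add: dist_norm norm_minus_commute)
  finally have "1 \<le> real CARD('i) * dist \<rho>' \<rho>0" .
  then show ?thesis by (simp add: divide_le_eq mult.commute)
qed

lemma compact_Delta: "compact (Delta h a :: (real^'i::finite) set)"
proof (subst compact_eq_bounded_closed, rule conjI)
  show "bounded (Delta h a :: (real^'i) set)"
  proof (rule bounded_subset[OF bounded_cball[of 0 1]])
    show "Delta h a \<subseteq> cball (0::real^'i) 1"
    proof
      fix \<rho> :: "real^'i" assume r: "\<rho> \<in> Delta h a"
      have "norm \<rho> \<le> (\<Sum>i\<in>UNIV. \<bar>\<rho> $ i\<bar>)" by (rule norm_le_l1_cart)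
      also have "\<dots> = (\<Sum>i\<in>UNIV. \<rho> $ i)" using r by (simp add: Delta_def)
      also have "\<dots> = 1" using r by (simp add: Delta_def)
      finally show "\<rho> \<in> cball 0 1" by simp
    qed
  qed
  have eq: "Delta h a = (\<Inter>i. {\<rho>::real^'i. 0 \<le> \<rho> $ i}) \<inter> (\<Inter>i\<in>{i. h i \<noteq> a}. {\<rho>. \<rho> $ i = 0})
      \<inter> {\<rho>. (\<Sum>i\<in>UNIV. \<rho> $ i) = 1}"
    by (auto simp: Delta_def)
  show "closed (Delta h a :: (real^'i) set)"
    unfolding eq
    by (intro closed_Int closed_INT closed_Collect_le closed_Collect_eq continuous_intros ballI)
qed

theorem mainTheorem5:
  fixes h :: "'i::finite \<Rightarrow> 'o::finite"
    and U :: "'u::metric_space set"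
    and \<Lambda> :: "'u \<Rightarrow> real^'i^'i"
    and \<nu> :: "'o \<Rightarrow> real^'i"
    and qa :: "'o \<Rightarrow> 'o \<Rightarrow> real"
    and w :: "real^'i \<Rightarrow> real"
  assumes h_surj: "surj h"
    and h_nonconst: "\<exists>x y. h x \<noteq> h y"
    and U_compact: "compact U"
    and offdiag: "\<forall>u\<in>U. \<forall>i j. i \<noteq> j \<longrightarrow> 0 \<le> \<Lambda> u $ i $ j"
    and rowsum: "\<forall>u\<in>U. \<forall>i. (\<Sum>j\<in>UNIV. \<Lambda> u $ i $ j) = 0"
    and nu_in: "\<forall>b. \<nu> b \<in> Delta h b"
    and qa_prob: "\<forall>a. (\<forall>b. 0 \<le> qa a b) \<and> qa a a = 0 \<and> (\<Sum>b\<in>UNIV. qa a b) = 1"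
    and lam_cont: "\<forall>i j. continuous_on U (\<lambda>u. \<Lambda> u $ i $ j)"
    and w_cont: "continuous_on (Delta_e h) w"
    and w_bdd: "bounded (w ` Delta_e h)"
  shows "\<forall>\<rho>\<in>Delta_e h. \<forall>\<epsilon>>0. \<exists>\<delta>>0. \<forall>\<rho>'\<in>Delta_e h. dist \<rho>' \<rho> < \<delta> \<longrightarrow>
           (\<exists>c<\<epsilon>. \<forall>u\<in>U.
              \<bar>rate h \<Lambda> \<rho>' u * integral\<^sup>L (Rker h \<Lambda> \<nu> qa \<rho>' u) w
               - rate h \<Lambda> \<rho> u * integral\<^sup>L (Rker h \<Lambda> \<nu> qa \<rho> u) w\<bar> \<le> c)"
proof (intro ballI allI impI)
  fix \<rho>0 :: "real^'i" and \<epsilon> :: real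
  assume r0e: "\<rho>0 \<in> Delta_e h" and ep: "0 < \<epsilon>"
  obtain a where r0: "\<rho>0 \<in> Delta h a" using r0e by (auto simp: Delta_e_def)
  obtain B where wb: "\<forall>x\<in>Delta_e h. \<bar>w x\<bar> \<le> B"
    using w_bdd by (auto simp: bounded_real)
  define K where "K = Delta h a \<times> U"
  define F where "F = (\<lambda>p. Gf h \<nu> w a (fst p v* \<Lambda> (snd p)))"
  have contF: "continuous_on K F"
    unfolding F_def Gf_def K_def
  proof (rule continuous_on_sum)
    fix b show "continuous_on (Delta h a \<times> U) (\<lambda>p. if b = a then 0 else
        ((fst p v* \<Lambda> (snd p)) \<bullet> ind h b) * w (Hop h \<nu> b (fst p v* \<Lambda> (snd p))))"
    proof (cases "b = a")
      case True then show ?thesis by simp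
    next
      case False then show ?thesis
        using cont_term[OF offdiag lam_cont w_cont wb nu_in False] by simp
    qed
  qed
  have "compact K" unfolding K_def by (intro compact_Times compact_Delta U_compact)
  then have "uniformly_continuous_on K F" using contF compact_uniformly_continuous by blast
  then obtain d where d: "d > 0"
    and dd: "\<And>x x'. x \<in> K \<Longrightarrow> x' \<in> K \<Longrightarrow> dist x' x < d \<Longrightarrow> dist (F x') (F x) < \<epsilon> / 2"
    unfolding uniformly_continuous_on_def using ep by (meson half_gt_zero)
  define \<delta> where "\<delta> = min d (1 / real CARD('i))"
  have dpos: "\<delta> > 0" using d by (simp add: \<delta>_def)
  show "\<exists>\<delta>>0. \<forall>\<rho>'\<in>Delta_e h. dist \<rho>' \<rho>0 < \<delta> \<longrightarrow>
           (\<exists>c<\<epsilon>. \<forall>u\<in>U.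
              \<bar>rate h \<Lambda> \<rho>' u * integral\<^sup>L (Rker h \<Lambda> \<nu> qa \<rho>' u) w
               - rate h \<Lambda> \<rho>0 u * integral\<^sup>L (Rker h \<Lambda> \<nu> qa \<rho>0 u) w\<bar> \<le> c)"
  proof (rule exI[of _ \<delta>], rule conjI[OF dpos], intro ballI impI)
    fix \<rho>' assume r1e: "\<rho>' \<in> Delta_e h" and dl: "dist \<rho>' \<rho>0 < \<delta>"
    obtain b where r1: "\<rho>' \<in> Delta h b" using r1e by (auto simp: Delta_e_def)
    have "b = a"
    proof (rule ccontr)
      assume "b \<noteq> a"
      then have "1 / real CARD('i) \<le> dist \<rho>' \<rho>0" using Delta_sep[OF r0 r1] by auto
      then show False using dl by (simp add: \<delta>_def)
    qed
    then have r1a: "\<rho>' \<in> Delta h a" using r1 by simp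
    show "\<exists>c<\<epsilon>. \<forall>u\<in>U.
              \<bar>rate h \<Lambda> \<rho>' u * integral\<^sup>L (Rker h \<Lambda> \<nu> qa \<rho>' u) w
               - rate h \<Lambda> \<rho>0 u * integral\<^sup>L (Rker h \<Lambda> \<nu> qa \<rho>0 u) w\<bar> \<le> c"
    proof -
      have "\<forall>u\<in>U. \<bar>rate h \<Lambda> \<rho>' u * integral\<^sup>L (Rker h \<Lambda> \<nu> qa \<rho>' u) w
               - rate h \<Lambda> \<rho>0 u * integral\<^sup>L (Rker h \<Lambda> \<nu> qa \<rho>0 u) w\<bar> \<le> \<epsilon> / 2"
      proof
      fix u assume uU: "u \<in> U"
      have e1: "rate h \<Lambda> \<rho>' u * integral\<^sup>L (Rker h \<Lambda> \<nu> qa \<rho>' u) w = F (\<rho>', u)"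
        unfolding F_def using rate_int_eq[where \<Lambda>=\<Lambda> and u=u, OF bspec[OF offdiag uU] bspec[OF rowsum uU] r1a nu_in qa_prob w_cont]
        by simp
      have e0: "rate h \<Lambda> \<rho>0 u * integral\<^sup>L (Rker h \<Lambda> \<nu> qa \<rho>0 u) w = F (\<rho>0, u)"
        unfolding F_def using rate_int_eq[where \<Lambda>=\<Lambda> and u=u, OF bspec[OF offdiag uU] bspec[OF rowsum uU] r0 nu_in qa_prob w_cont]
        by simp
      have "dist (\<rho>', u) (\<rho>0, u) = dist \<rho>' \<rho>0" by (simp add: dist_Pair_Pair)
      then have "dist (\<rho>', u) (\<rho>0, u) < d" using dl by (simp add: \<delta>_def)
      then have "dist (F (\<rho>', u)) (F (\<rho>0, u)) < \<epsilon> / 2"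
        by (intro dd) (use r0 r1a uU in \<open>auto simp: K_def\<close>)
      then show "\<bar>rate h \<Lambda> \<rho>' u * integral\<^sup>L (Rker h \<Lambda> \<nu> qa \<rho>' u) w
               - rate h \<Lambda> \<rho>0 u * integral\<^sup>L (Rker h \<Lambda> \<nu> qa \<rho>0 u) w\<bar> \<le> \<epsilon> / 2"
        unfolding e1 e0 by (simp add: dist_real_def)
      qed
      moreover have "\<epsilon> / 2 < \<epsilon>" using ep by simp
      ultimately show ?thesis by blast
    qed
  qed
qed

end
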